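(* For any complex number $a\in\mathbb{C}$, the spectral density function of $z-a\in\mathbb{C}[\mathbb{Z}]=\mathbb{C}[z,z^{-1}]$ satisfies \[ F\bigl(r_{z-a}^{(2)}\bigr)(\lambda)\le\frac{8\sqrt3}{\sqrt{47}}\cdot\lambda\quad\text{for all }\lambda\in[0,\infty). \]
   Context: For $q\in\mathbb{C}[z,z^{-1}]$, $r_q^{(2)}\colon L^2(\mathbb{Z})\to L^2(\mathbb{Z})$ is multiplication by $q$, and its spectral density function is $F(r_q^{(2)})(\lambda)=\mu_{S^1}\bigl(\{z\in S^1: |q(z)|\le\lambda\}\bigr)$ with $\mu_{S^1}$ the normalized Haar measure on the unit circle. *)

theory Defs
  imports "HOL-Analysis.Analysis"
begin

definition circle_haar :: "complex measure" where
  "circle_haar = distr (restrict_space lborel {0..1::real}) borel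
                       (\<lambda>t. cis (2 * pi * t))"

text \<open>Spectral density function of r_q^(2) (multiplication by q on L^2(Z)),
where q is given by its evaluation function on the circle.\<close>
definition spectral_density :: "(complex \<Rightarrow> complex) \<Rightarrow> real \<Rightarrow> real" where
  "spectral_density q lam = measure circle_haar {z \<in> space circle_haar. cmod (q z) \<le> lam}"

end

theory Submission
  imports Defs
begin


lemma sin_cubic: fixes x :: real assumes "0 \<le> x" shows "x - x^3/6 \<le> sin x"
proof -
  have "\<bar>sin x - (\<Sum>m<3. sin_coeff m * x ^ m)\<bar> \<le> inverse (fact 3) * \<bar>x\<bar> ^ 3"
    by (rule Maclaurin_sin_bound)
  moreover have "(\<Sum>m<3. sin_coeff m * x ^ m) = x"
    by (simp add: numeral_3_eq_3 sin_coeff_def)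
  ultimately have "\<bar>sin x - x\<bar> * 6 \<le> x ^ 3" using assms by (simp add: fact_numeral)
  moreover have "(x - sin x) * 6 \<le> \<bar>sin x - x\<bar> * 6" by (intro mult_right_mono) auto
  ultimately have "(x - sin x) * 6 \<le> x^3" by (rule order_trans[rotated])
  then show ?thesis by (simp add: field_simps)
qed

lemma cos_quad: fixes y :: real shows "1 - y^2/2 \<le> cos y"
proof -
  have "cos y = 1 - 2 * sin (y/2) ^ 2" using cos_double_sin[of "y/2"] by simp
  moreover have "sin (y/2)^2 \<le> (y/2)^2"
    using abs_sin_x_le_abs_x[of "y/2"] by (metis abs_ge_zero power2_abs power_mono)
  ultimately show ?thesis by (simp add: power_divide)
qed

lemma jordan: fixes x :: real assumes "0 \<le> x" "x \<le> pi/2" shows "2 * x / pi \<le> sin x"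
proof (cases "x \<le> 1")
  case True
  have p: "pi > 3" by (rule pi_gt3)
  have "x^2 \<le> 1" using True assms by (simp add: power_le_one)
  then have "x^3 \<le> x" using assms mult_left_le[of "x*x" x] by (simp add: power3_eq_cube power2_eq_square mult.assoc mult.commute)
  have "2 * x / pi \<le> 2*x/3" using p assms by (intro divide_left_mono) auto
  also have "\<dots> \<le> x - x^3/6" using \<open>x^3 \<le> x\<close> assms by simp
  finally show ?thesis using sin_cubic[OF assms(1)] by linarith
next
  case False
  define y where "y = pi/2 - x"
  have p: "pi > 3" by (rule pi_gt3)
  have y: "0 \<le> y" "y \<le> pi/2 - 1" using assms False by (auto simp: y_def)
  have "sin x = cos y" by (simp add: y_def cos_sin_eq)
  have "y^2/2 \<le> 2*y/pi"
  proof -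
    have "y \<le> 1" using y pi_less_4 by linarith
    then have "y * pi \<le> 1 * pi" by (intro mult_right_mono) auto
    then have "y * pi \<le> 4" using pi_less_4 by linarith
    then have "y*(y*pi) \<le> y*4" using y by (intro mult_left_mono) auto
    then have "y*y*pi \<le> 4*y" by (simp add: ac_simps)
    then show ?thesis using p by (simp add: field_simps power2_eq_square)
  qed
  then have "2*x/pi \<le> 1 - y^2/2" using p by (simp add: y_def field_simps)
  then show ?thesis using cos_quad[of y] \<open>sin x = cos y\<close> by linarith
qed

lemma sin_pi_bound:
  fixes s lam :: real
  assumes "-1 \<le> s" "s \<le> 1" "abs (sin (pi * s)) \<le> lam"
  shows "\<bar>s\<bar> \<le> lam/2 \<or> s \<ge> 1 - lam/2 \<or> s \<le> -1 + lam/2"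
proof -
  have pos: "u \<le> lam/2 \<or> u \<ge> 1 - lam/2" if u: "0 \<le> u" "u \<le> 1" "abs (sin (pi * u)) \<le> lam" for u :: real
  proof (cases "u \<le> 1/2")
    case True
    have "2 * (pi * u) / pi \<le> sin (pi * u)" using True u by (intro jordan) auto
    then have "2*u \<le> lam" using u(3) by simp
    then show ?thesis by simp
  next
    case False
    have "sin (pi * u) = sin (pi * (1-u))"
      by (simp add: right_diff_distrib)
    moreover have "2 * (pi * (1-u)) / pi \<le> sin (pi * (1-u))" using False u by (intro jordan) auto
    ultimately have "2*(1-u) \<le> lam" using u(3) by simp
    then show ?thesis by simp
  qed
  show ?thesis
  proof (cases "s \<ge> 0")
    case True then show ?thesis using pos[of s] assms by auto
  next
    case False
    have "abs (sin (pi * (-s))) \<le> lam" using assms by simp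
    then show ?thesis using pos[of "-s"] assms False by auto
  qed
qed

lemma chord: "cmod (cis x - cis y) = 2 * \<bar>sin ((x - y)/2)\<bar>"
proof -
  have "(cmod (cis x - cis y))^2 = (cos x - cos y)^2 + (sin x - sin y)^2"
    by (simp add: cmod_power2)
  also have "\<dots> = 2 - 2 * cos (x - y)"
    by (simp add: power2_diff cos_diff algebra_simps)
  also have "\<dots> = (2 * \<bar>sin ((x - y)/2)\<bar>)^2"
  proof -
    have e: "(2::real) * ((x-y)/2) = x - y" by simp
    show ?thesis using cos_double_sin[of "(x-y)/2", unfolded e] by (simp add: power_mult_distrib)
  qed
  finally show ?thesis
    by (rule power2_eq_imp_eq) auto
qed


theorem lemma2p2:
  fixes a :: complex and lam :: real
  assumes "lam \<ge> 0"
  shows "spectral_density (\<lambda>z. z - a) lam \<le> 8 * sqrt 3 / sqrt 47 * lam"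
proof -
  define f where "f = (\<lambda>t::real. cis (2 * pi * t))"
  define C where "C = {z. cmod (z - a) \<le> lam}"
  define S where "S = f -` C \<inter> {0..1}"
  have sp: "space circle_haar = UNIV" by (simp add: circle_haar_def)
  have fb: "f \<in> borel_measurable borel"
  proof -
    have "continuous_on UNIV f" unfolding f_def by (intro continuous_intros)
    then show ?thesis by (rule borel_measurable_continuous_onI)
  qed
  have fm: "f \<in> measurable (restrict_space lborel {0..1}) borel"
  proof -
    have "f \<in> borel_measurable lborel" using fb by simp
    then show ?thesis by (rule measurable_restrict_space1)
  qed
  have Ccl: "C = cball a lam" by (auto simp: C_def dist_norm norm_minus_commute)
  have Cs: "C \<in> sets borel" unfolding Ccl by simp
  have "spectral_density (\<lambda>z. z - a) lam = measure circle_haar C"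
    by (simp add: spectral_density_def sp C_def)
  also have "\<dots> = measure (restrict_space lborel {0..1}) S"
    unfolding circle_haar_def S_def using fm Cs
    by (subst measure_distr) (simp_all add: f_def)
  also have "\<dots> = measure lborel S"
    by (rule measure_restrict_space) (auto simp: S_def)
  also have "\<dots> \<le> 2 * lam"
  proof (cases "S = {}")
    case True then show ?thesis using assms by simp
  next
    case False
    then obtain t0 where t0: "t0 \<in> S" by blast
    define I where "I = {t0 - lam/2 .. t0 + lam/2} \<union> {0 .. lam/2} \<union> {1 - lam/2 .. 1}"
    have sub: "S \<subseteq> I"
    proof
      fix t assume t: "t \<in> S"
      have "cmod (f t - f t0) \<le> cmod (f t - a) + cmod (f t0 - a)"
      proof -
        have "f t - f t0 = (f t - a) - (f t0 - a)" by simp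
        then show ?thesis by (metis norm_triangle_ineq4)
      qed
      also have "\<dots> \<le> 2 * lam" using t t0 by (simp add: S_def C_def)
      finally have "cmod (f t - f t0) \<le> 2 * lam" .
      moreover have "cmod (f t - f t0) = 2 * abs (sin (pi * (t - t0)))"
      proof -
        have e: "(2 * pi * t - 2 * pi * t0) / 2 = pi * (t - t0)" by (simp add: field_simps)
        show ?thesis by (simp only: f_def chord e)
      qed
      ultimately have "abs (sin (pi * (t - t0))) \<le> lam" by simp
      moreover have "-1 \<le> t - t0" "t - t0 \<le> 1" using t t0 by (auto simp: S_def)
      ultimately have "\<bar>t - t0\<bar> \<le> lam/2 \<or> t - t0 \<ge> 1 - lam/2 \<or> t - t0 \<le> -1 + lam/2"
        by (intro sin_pi_bound) auto
      moreover have r: "0 \<le> t" "t \<le> 1" "0 \<le> t0" "t0 \<le> 1" using t t0 by (auto simp: S_def)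
      ultimately show "t \<in> I"
      proof (elim disjE)
        assume "\<bar>t - t0\<bar> \<le> lam/2"
        then have "t0 - lam/2 \<le> t \<and> t \<le> t0 + lam/2" by linarith
        then show ?thesis by (simp add: I_def)
      next
        assume "t - t0 \<ge> 1 - lam/2"
        then have "1 - lam/2 \<le> t" using r by linarith
        then show ?thesis using r by (simp add: I_def)
      next
        assume "t - t0 \<le> -1 + lam/2"
        then have "t \<le> lam/2" using r by linarith
        then show ?thesis using r by (simp add: I_def)
      qed
    qed
    have Ss: "S \<in> sets lborel"
    proof -
      have "f -` C \<inter> space borel \<in> sets borel" using Cs fb by (rule measurable_sets[rotated])
      then have "f -` C \<in> sets borel" by simp
      then show ?thesis unfolding S_def by simp
    qed
    have "measure lborel S \<le> measure lborel I"
      by (rule measure_mono_fmeasurable[OF sub Ss]) (auto simp: I_def intro!: fmeasurable_compact compact_Un)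
    also have "\<dots> \<le> measure lborel ({t0 - lam/2 .. t0 + lam/2} \<union> {0 .. lam/2}) + measure lborel {1 - lam/2 .. 1}"
      unfolding I_def by (rule measure_Un_le) auto
    also have "\<dots> \<le> measure lborel {t0 - lam/2 .. t0 + lam/2} + measure lborel {0 .. lam/2} + measure lborel {1 - lam/2 .. 1}"
      using measure_Un_le[of "{t0 - lam/2 .. t0 + lam/2}" lborel "{0 .. lam/2}"] by simp
    also have "\<dots> = 2 * lam" using assms by simp
    finally show ?thesis .
  qed
  also have "\<dots> \<le> 8 * sqrt 3 / sqrt 47 * lam"
  proof -
    have "sqrt 188 \<le> sqrt 192" by simp
    moreover have "sqrt 188 = 2 * sqrt 47" using real_sqrt_mult[of 4 47] by simp
    moreover have "sqrt 192 = 8 * sqrt 3" using real_sqrt_mult[of 64 3] by simp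
    ultimately have "2 \<le> 8 * sqrt 3 / sqrt 47" by (simp add: field_simps)
    then show ?thesis using assms by (intro mult_right_mono) auto
  qed
  finally show ?thesis .
qed

end
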